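(* Let $\epsilon$ be real and, for $i=1,2$, let $\alpha_i,\beta_i,\eta_i$ be real constants with $\beta_i^2=e^{\alpha_i\epsilon}+e^{-\alpha_i\epsilon}-2$. Assume $P(p_1+p_2)\neq0$ and set $A(1,2)=-\dfrac{P(p_1-p_2)}{P(p_1+p_2)}$. Then $$f(x,t)=1+e^{\theta_1}+e^{\theta_2}+A(1,2)e^{\theta_1+\theta_2},\qquad \theta_i=-\frac{\alpha_i}{x}+\beta_i t+\eta_i,$$ satisfies the bilinear generalized $q$-Toda equation $\big[D_t^2-\big(e^{\epsilon x^2D_x}+e^{-\epsilon x^2 D_x}-2\big)\big]f\cdot f=0$.
   Context: Hirota operators: $P(D_x,D_t)\,f\cdot g := P(\partial_x-\partial_{x'},\partial_t-\partial_{t'})f(x,t)g(x',t')|_{x'=x,t'=t}$; $e^{\pm\epsilon x^2 D_x} f\cdot g$ means $f\!\left(\frac{x}{1\mp\epsilon x}\right)g\!\left(\frac{x}{1\pm\epsilon x}\right)$. For a vector $p=(\beta,\alpha,\eta)$ define $P(p)=\beta^2-\big(e^{\alpha\epsilon}+e^{-\alpha\epsilon}-2\big)$, and $p_i=(\beta_i,\alpha_i,\eta_i)$ with componentwise sums and differences. *)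

theory Defs
  imports "HOL-Analysis.Analysis"
begin

text \<open>Hirota operator D_t^2 applied to f . g (functions of (x,t)), evaluated at (x,t):
  (d_t - d_t')^2 f(x,t) g(x,t') at t'=t, i.e. f_tt g - 2 f_t g_t + f g_tt.\<close>
definition hirota_Dt2 :: "(real \<Rightarrow> real \<Rightarrow> real) \<Rightarrow> (real \<Rightarrow> real \<Rightarrow> real) \<Rightarrow> real \<Rightarrow> real \<Rightarrow> real" where
  "hirota_Dt2 f g x t =
     deriv (deriv (\<lambda>s. f x s)) t * g x t
     - 2 * deriv (\<lambda>s. f x s) t * deriv (\<lambda>s. g x s) t
     + f x t * deriv (deriv (\<lambda>s. g x s)) t"

text \<open>exp(+-eps x^2 D_x) f . g = f(x/(1 -+ eps x)) g(x/(1 +- eps x)).\<close>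
definition q_shift :: "real \<Rightarrow> (real \<Rightarrow> real \<Rightarrow> real) \<Rightarrow> (real \<Rightarrow> real \<Rightarrow> real) \<Rightarrow> real \<Rightarrow> real \<Rightarrow> real" where
  "q_shift e f g x t = f (x / (1 - e * x)) t * g (x / (1 + e * x)) t"

definition qToda_lhs :: "real \<Rightarrow> (real \<Rightarrow> real \<Rightarrow> real) \<Rightarrow> (real \<Rightarrow> real \<Rightarrow> real) \<Rightarrow> real \<Rightarrow> real \<Rightarrow> real" where
  "qToda_lhs e f g x t =
     hirota_Dt2 f g x t - (q_shift e f g x t + q_shift (-e) f g x t - 2 * (f x t * g x t))"

definition Pp :: "real \<Rightarrow> real \<times> real \<times> real \<Rightarrow> real" where
  "Pp e p = (case p of (\<beta>, \<alpha>, \<eta>) \<Rightarrow> \<beta>^2 - (exp (\<alpha> * e) + exp (- \<alpha> * e) - 2))"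

end

theory Submission
  imports Defs
begin

lemma key:
  fixes u w b1 b2 A E1 E2 :: real
  assumes u: "u \<noteq> 0" and w: "w \<noteq> 0"
   and Q1: "b1^2 - (u + 1/u - 2) = 0" and Q2: "b2^2 - (w + 1/w - 2) = 0"
   and H: "A*((b1+b2)^2 - (u * w + 1/(u * w) - 2)) + ((b1-b2)^2 - (u/w + w/u - 2)) = 0"
  shows "(b1^2*E1 + b2^2*E2 + A*(b1+b2)^2*(E1*E2)) * (1+E1+E2+A*(E1*E2))
     - 2*((b1*E1+b2*E2+A*(b1+b2)*(E1*E2))*(b1*E1+b2*E2+A*(b1+b2)*(E1*E2)))
     + (1+E1+E2+A*(E1*E2))*(b1^2*E1 + b2^2*E2 + A*(b1+b2)^2*(E1*E2))
     - ((1 + u*E1 + w*E2 + A*(u * w)*(E1*E2)) * (1 + E1/u + E2/w + A*(E1*E2)/(u * w))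
       + (1 + E1/u + E2/w + A*(E1*E2)/(u * w)) * (1 + u*E1 + w*E2 + A*(u * w)*(E1*E2))
       - 2*((1+E1+E2+A*(E1*E2))*(1+E1+E2+A*(E1*E2)))) = 0"
proof -
  have "(b1^2*E1 + b2^2*E2 + A*(b1+b2)^2*(E1*E2)) * (1+E1+E2+A*(E1*E2))
     - 2*((b1*E1+b2*E2+A*(b1+b2)*(E1*E2))*(b1*E1+b2*E2+A*(b1+b2)*(E1*E2)))
     + (1+E1+E2+A*(E1*E2))*(b1^2*E1 + b2^2*E2 + A*(b1+b2)^2*(E1*E2))
     - ((1 + u*E1 + w*E2 + A*(u * w)*(E1*E2)) * (1 + E1/u + E2/w + A*(E1*E2)/(u * w))
       + (1 + E1/u + E2/w + A*(E1*E2)/(u * w)) * (1 + u*E1 + w*E2 + A*(u * w)*(E1*E2))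
       - 2*((1+E1+E2+A*(E1*E2))*(1+E1+E2+A*(E1*E2))))
    = 2*(E1*(b1^2 - (u + 1/u - 2)) + E2*(b2^2 - (w + 1/w - 2))
       + A*E1^2*E2*(b2^2 - (w + 1/w - 2)) + A*E1*E2^2*(b1^2 - (u + 1/u - 2))
       + E1*E2*(A*((b1+b2)^2 - (u * w + 1/(u * w) - 2)) + ((b1-b2)^2 - (u/w + w/u - 2))))"
    using u w by (simp add: field_simps) (simp add: algebra_simps power2_eq_square)
  also have "\<dots> = 0" using Q1 Q2 H by simp
  finally show ?thesis .
qed

theorem mainTheorem3:
  fixes e \<alpha>1 \<beta>1 \<eta>1 \<alpha>2 \<beta>2 \<eta>2 :: real
  assumes disp1: "\<beta>1^2 = exp (\<alpha>1 * e) + exp (- \<alpha>1 * e) - 2"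
    and disp2: "\<beta>2^2 = exp (\<alpha>2 * e) + exp (- \<alpha>2 * e) - 2"
    and nz: "Pp e (\<beta>1 + \<beta>2, \<alpha>1 + \<alpha>2, \<eta>1 + \<eta>2) \<noteq> 0"
  shows "let A = - Pp e (\<beta>1 - \<beta>2, \<alpha>1 - \<alpha>2, \<eta>1 - \<eta>2) / Pp e (\<beta>1 + \<beta>2, \<alpha>1 + \<alpha>2, \<eta>1 + \<eta>2);
             \<theta>1 = (\<lambda>x t. - \<alpha>1 / x + \<beta>1 * t + \<eta>1);
             \<theta>2 = (\<lambda>x t. - \<alpha>2 / x + \<beta>2 * t + \<eta>2);
             f = (\<lambda>x t. 1 + exp (\<theta>1 x t) + exp (\<theta>2 x t) + A * exp (\<theta>1 x t + \<theta>2 x t))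
         in \<forall>x t. x \<noteq> 0 \<and> 1 - e * x \<noteq> 0 \<and> 1 + e * x \<noteq> 0 \<longrightarrow> qToda_lhs e f f x t = 0"
proof -
  define u where "u = exp (\<alpha>1 * e)"
  define w where "w = exp (\<alpha>2 * e)"
  have u0: "u \<noteq> 0" and w0: "w \<noteq> 0" unfolding u_def w_def by auto
  define A where "A = - Pp e (\<beta>1 - \<beta>2, \<alpha>1 - \<alpha>2, \<eta>1 - \<eta>2) / Pp e (\<beta>1 + \<beta>2, \<alpha>1 + \<alpha>2, \<eta>1 + \<eta>2)"
  have em: "\<And>a. exp (- a * e) = 1 / exp (a * e)" by (simp add: exp_minus field_simps)
  have Q1: "\<beta>1^2 - (u + 1/u - 2) = 0" using disp1 em[of \<alpha>1] unfolding u_def by simp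
  have Q2: "\<beta>2^2 - (w + 1/w - 2) = 0" using disp2 em[of \<alpha>2] unfolding w_def by simp
  have Pplus: "Pp e (\<beta>1 + \<beta>2, \<alpha>1 + \<alpha>2, \<eta>1 + \<eta>2) = (\<beta>1+\<beta>2)^2 - (u * w + 1/(u * w) - 2)"
    unfolding Pp_def u_def w_def by (simp add: em distrib_right exp_add exp_diff exp_minus field_simps)
  have Pminus: "Pp e (\<beta>1 - \<beta>2, \<alpha>1 - \<alpha>2, \<eta>1 - \<eta>2) = (\<beta>1-\<beta>2)^2 - (u / w + w / u - 2)"
    unfolding Pp_def u_def w_def by (simp add: em left_diff_distrib exp_diff)
  have H: "A*((\<beta>1+\<beta>2)^2 - (u * w + 1/(u * w) - 2)) + ((\<beta>1-\<beta>2)^2 - (u / w + w / u - 2)) = 0"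
    using nz unfolding A_def Pplus Pminus by simp
  show ?thesis
    unfolding Let_def A_def[symmetric]
  proof (intro allI impI)
    fix x t :: real
    assume xx: "x \<noteq> 0 \<and> 1 - e * x \<noteq> 0 \<and> 1 + e * x \<noteq> 0"
    define f where "f = (\<lambda>x t. 1 + exp (- \<alpha>1 / x + \<beta>1 * t + \<eta>1) + exp (- \<alpha>2 / x + \<beta>2 * t + \<eta>2) + A * exp (- \<alpha>1 / x + \<beta>1 * t + \<eta>1 + (- \<alpha>2 / x + \<beta>2 * t + \<eta>2)))"
    define E1 where "E1 = exp (- \<alpha>1 / x + \<beta>1 * t + \<eta>1)"
    define E2 where "E2 = exp (- \<alpha>2 / x + \<beta>2 * t + \<eta>2)"
    have d1: "deriv (\<lambda>s. f y s) = (\<lambda>s. \<beta>1 * exp (- \<alpha>1 / y + \<beta>1 * s + \<eta>1) + \<beta>2 * exp (- \<alpha>2 / y + \<beta>2 * s + \<eta>2) + A * (\<beta>1+\<beta>2) * exp (- \<alpha>1 / y + \<beta>1 * s + \<eta>1 + (- \<alpha>2 / y + \<beta>2 * s + \<eta>2)))" for y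
    proof
      fix s
      show "deriv (\<lambda>s. f y s) s = \<beta>1 * exp (- \<alpha>1 / y + \<beta>1 * s + \<eta>1) + \<beta>2 * exp (- \<alpha>2 / y + \<beta>2 * s + \<eta>2) + A * (\<beta>1+\<beta>2) * exp (- \<alpha>1 / y + \<beta>1 * s + \<eta>1 + (- \<alpha>2 / y + \<beta>2 * s + \<eta>2))"
        unfolding f_def
        by (rule DERIV_imp_deriv, (rule derivative_eq_intros refl)+, simp add: algebra_simps)
    qed
    have d2: "deriv (deriv (\<lambda>s. f y s)) s = \<beta>1^2 * exp (- \<alpha>1 / y + \<beta>1 * s + \<eta>1) + \<beta>2^2 * exp (- \<alpha>2 / y + \<beta>2 * s + \<eta>2) + A * (\<beta>1+\<beta>2)^2 * exp (- \<alpha>1 / y + \<beta>1 * s + \<eta>1 + (- \<alpha>2 / y + \<beta>2 * s + \<eta>2))" for y s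
      unfolding d1
      by (rule DERIV_imp_deriv, (rule derivative_eq_intros refl)+, simp add: algebra_simps power2_eq_square)
    have fx: "f x t = 1+E1+E2+A*(E1*E2)" unfolding f_def E1_def E2_def by (simp add: exp_add)
    have sh1: "- \<alpha> / (x / (1 - e * x)) = - \<alpha> / x + \<alpha> * e" for \<alpha>
      using xx by (simp add: field_simps)
    have sh2: "- \<alpha> / (x / (1 + e * x)) = - \<alpha> / x - \<alpha> * e" for \<alpha>
      using xx by (simp add: field_simps)
    have fp: "f (x / (1 - e * x)) t = 1 + u*E1 + w*E2 + A*(u * w)*(E1*E2)"
      unfolding f_def E1_def E2_def u_def w_def sh1
      by (simp add: exp_add[symmetric] algebra_simps)
    have fm: "f (x / (1 + e * x)) t = 1 + E1/u + E2/w + A*(E1*E2)/(u * w)"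
      unfolding f_def E1_def E2_def u_def w_def sh2
      by (simp add: exp_diff exp_add field_simps)
    have fm': "f (x / (1 - - e * x)) t = 1 + E1/u + E2/w + A*(E1*E2)/(u * w)" using fm by simp
    have fp': "f (x / (1 + - e * x)) t = 1 + u*E1 + w*E2 + A*(u * w)*(E1*E2)" using fp by simp
    have D1: "deriv (\<lambda>s. f x s) t = \<beta>1*E1+\<beta>2*E2+A*(\<beta>1+\<beta>2)*(E1*E2)"
      unfolding d1 E1_def E2_def by (simp add: exp_add)
    have D2: "deriv (deriv (\<lambda>s. f x s)) t = \<beta>1^2*E1 + \<beta>2^2*E2 + A*(\<beta>1+\<beta>2)^2*(E1*E2)"
      unfolding d2 E1_def E2_def by (simp add: exp_add)
    show "qToda_lhs e f f x t = 0"
      unfolding qToda_lhs_def hirota_Dt2_def q_shift_def D1 D2 fx fp fm fp' fm'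
      using key[OF u0 w0 Q1 Q2 H, of E1 E2] by (simp add: algebra_simps)
  qed
qed

end
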